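(* Let $\Sigma$ be a mixing one-sided subshift of finite type and $L,L'\in\mathrm{QM}(\mathscr W)$. Then $L\sim L'$ if and only if $\bar L(\mathbf a)=\bar L'(\mathbf a)$ for every periodic word $\mathbf a$. Consequently $L\sim L'$ if and only if the restrictions of $L$ and $L'$ to periodic words differ by a bounded function.
   Context: $\Sigma=\{(x_n)_{n\ge0}:R_{x_nx_{n+1}}=1\}$ for an irreducible aperiodic $0/1$ matrix $R$ on alphabet $\mathscr A=\{1,\dots,d\}$. $\mathscr W$ is the set of finite allowed words (including the empty word), concatenation $\mathbf a\mathbf b$ being defined when allowed. $L:\mathscr W\to\mathbb R$ is a quasimorphism ($L\in\mathrm{QM}(\mathscr W)$) if $\sup|L(\mathbf a\mathbf b)-L(\mathbf a)-L(\mathbf b)|<\infty$ over concatenable pairs. $L\sim L'$ if $L-L'$ is bounded on $\mathscr W$. A nonempty word $\mathbf a=a_1\cdots a_n$ is periodic if $R_{a_na_1}=1$; for such $\mathbf a$, $\bar L(\mathbf a)=\lim_{k\to\infty}L(\mathbf a^k)/k$, where $\mathbf a^k$ is the $k$-fold concatenation. *)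

theory Defs
  imports Complex_Main
begin

text \<open>Alphabet {1..d}; the 0/1 transition matrix R is encoded as a relation:
  R i j = True iff R_{ij} = 1.\<close>

definition alphabet :: "nat \<Rightarrow> nat set" where
  "alphabet d = {1..d}"

definition allowed :: "nat \<Rightarrow> (nat \<Rightarrow> nat \<Rightarrow> bool) \<Rightarrow> nat list \<Rightarrow> bool" where
  "allowed d R w \<longleftrightarrow> set w \<subseteq> alphabet d \<and> (\<forall>i. Suc i < length w \<longrightarrow> R (w ! i) (w ! Suc i))"

definition words :: "nat \<Rightarrow> (nat \<Rightarrow> nat \<Rightarrow> bool) \<Rightarrow> nat list set" where
  "words d R = {w. allowed d R w}"

text \<open>(R^n)_{ij} > 0, i.e. there is an allowed path of n steps from i to j.\<close>
definition mat_pow_pos :: "nat \<Rightarrow> (nat \<Rightarrow> nat \<Rightarrow> bool) \<Rightarrow> nat \<Rightarrow> nat \<Rightarrow> nat \<Rightarrow> bool" where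
  "mat_pow_pos d R n i j \<longleftrightarrow>
     (\<exists>w. length w = Suc n \<and> allowed d R w \<and> hd w = i \<and> last w = j)"

definition irreducible_mat :: "nat \<Rightarrow> (nat \<Rightarrow> nat \<Rightarrow> bool) \<Rightarrow> bool" where
  "irreducible_mat d R \<longleftrightarrow>
     (\<forall>i\<in>alphabet d. \<forall>j\<in>alphabet d. \<exists>n>0. mat_pow_pos d R n i j)"

definition aperiodic_mat :: "nat \<Rightarrow> (nat \<Rightarrow> nat \<Rightarrow> bool) \<Rightarrow> bool" where
  "aperiodic_mat d R \<longleftrightarrow>
     (\<forall>i\<in>alphabet d. Gcd {n. n > 0 \<and> mat_pow_pos d R n i i} = 1)"

definition quasimorphism :: "nat \<Rightarrow> (nat \<Rightarrow> nat \<Rightarrow> bool) \<Rightarrow> (nat list \<Rightarrow> real) \<Rightarrow> bool" where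
  "quasimorphism d R L \<longleftrightarrow>
     (\<exists>C. \<forall>a b. a \<in> words d R \<longrightarrow> b \<in> words d R \<longrightarrow> a @ b \<in> words d R \<longrightarrow>
            \<bar>L (a @ b) - L a - L b\<bar> \<le> C)"

definition qm_equiv :: "nat \<Rightarrow> (nat \<Rightarrow> nat \<Rightarrow> bool) \<Rightarrow> (nat list \<Rightarrow> real) \<Rightarrow> (nat list \<Rightarrow> real) \<Rightarrow> bool" where
  "qm_equiv d R L L' \<longleftrightarrow> (\<exists>C. \<forall>w \<in> words d R. \<bar>L w - L' w\<bar> \<le> C)"

definition periodic_word :: "nat \<Rightarrow> (nat \<Rightarrow> nat \<Rightarrow> bool) \<Rightarrow> nat list \<Rightarrow> bool" where
  "periodic_word d R a \<longleftrightarrow> a \<noteq> [] \<and> a \<in> words d R \<and> R (last a) (hd a)"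

definition word_pow :: "nat list \<Rightarrow> nat \<Rightarrow> nat list" where
  "word_pow a k = concat (replicate k a)"

definition Lbar :: "(nat list \<Rightarrow> real) \<Rightarrow> nat list \<Rightarrow> real" where
  "Lbar L a = lim (\<lambda>k. L (word_pow a k) / real k)"

end

theory Submission
  imports Defs
begin

lemma allowed_Nil[simp]: "allowed d R []" by (simp add: allowed_def)

lemma allowed_Cons: "allowed d R (x#xs) \<longleftrightarrow> x \<in> alphabet d \<and> allowed d R xs \<and> (xs \<noteq> [] \<longrightarrow> R x (hd xs))"
proof -
  have "(\<forall>i. Suc i < length (x#xs) \<longrightarrow> R ((x#xs)!i) ((x#xs)!Suc i)) \<longleftrightarrow>
        (xs\<noteq>[] \<longrightarrow> R x (hd xs)) \<and> (\<forall>i. Suc i < length xs \<longrightarrow> R (xs!i) (xs!Suc i))"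
    (is "?A \<longleftrightarrow> ?B \<and> ?C")
  proof
    assume A: ?A
    have ?B using A[rule_format, of 0] by (cases xs) auto
    moreover have ?C using A by (metis Suc_less_eq length_Cons nth_Cons_Suc)
    ultimately show "?B \<and> ?C" ..
  next
    assume BC: "?B \<and> ?C"
    show ?A
    proof (intro allI impI)
      fix i assume i: "Suc i < length (x#xs)"
      show "R ((x#xs)!i) ((x#xs)!Suc i)"
      proof (cases i)
        case 0 then show ?thesis using BC i by (cases xs) auto
      next
        case (Suc j) then show ?thesis using BC i by auto
      qed
    qed
  qed
  then show ?thesis unfolding allowed_def by auto
qed

lemma allowed_append: "allowed d R (u@v) \<longleftrightarrow> allowed d R u \<and> allowed d R v \<and> (u \<noteq> [] \<longrightarrow> v \<noteq> [] \<longrightarrow> R (last u) (hd v))"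
  by (induction u) (auto simp: allowed_Cons)

lemma word_pow_add: "word_pow a (m+n) = word_pow a m @ word_pow a n"
  by (simp add: word_pow_def replicate_add)

lemma word_pow_in:
  assumes "periodic_word d R a" shows "word_pow a k \<in> words d R"
proof (induction k)
  case 0 then show ?case by (simp add: word_pow_def words_def)
next
  case (Suc k)
  have e: "word_pow a (Suc k) = a @ word_pow a k" by (simp add: word_pow_def)
  have h: "k > 0 \<Longrightarrow> hd (word_pow a k) = hd a" using assms
    by (cases k) (auto simp: word_pow_def periodic_word_def)
  show ?case using Suc assms h unfolding e words_def periodic_word_def
    by (auto simp: allowed_append word_pow_def)
qed

lemma qm_pow:
  assumes p: "periodic_word d R a"
    and C: "\<forall>a b. a \<in> words d R \<longrightarrow> b \<in> words d R \<longrightarrow> a @ b \<in> words d R \<longrightarrow> \<bar>Q (a @ b) - Q a - Q b\<bar> \<le> C"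
  shows "\<bar>Q (word_pow a (m*n)) - real m * Q (word_pow a n)\<bar> \<le> (real m + 1) * C"
proof (induction m)
  case 0
  have "[] \<in> words d R" by (simp add: words_def)
  then have "\<bar>Q ([] @ []) - Q [] - Q []\<bar> \<le> C" using C[rule_format, of "[]" "[]"] by simp
  moreover have "C \<ge> 0" using C \<open>[] \<in> words d R\<close> by (metis abs_ge_zero append_Nil order_trans)
  ultimately show ?case by (simp add: word_pow_def)
next
  case (Suc m)
  have "\<bar>Q (word_pow a n @ word_pow a (m*n)) - Q (word_pow a n) - Q (word_pow a (m*n))\<bar> \<le> C"
    using C word_pow_in[OF p] by (metis word_pow_add)
  then have "\<bar>Q (word_pow a (Suc m * n)) - Q (word_pow a n) - Q (word_pow a (m*n))\<bar> \<le> C"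
    by (simp add: word_pow_add)
  with Suc show ?case by (simp add: algebra_simps abs_le_iff)
qed


lemma qm_C_nonneg:
  assumes C: "\<forall>a b. a \<in> words d R \<longrightarrow> b \<in> words d R \<longrightarrow> a @ b \<in> words d R \<longrightarrow> \<bar>(Q :: nat list \<Rightarrow> real) (a @ b) - Q a - Q b\<bar> \<le> C"
  shows "C \<ge> 0"
proof -
  have "\<bar>Q ([] @ []) - Q [] - Q []\<bar> \<le> C" using C[rule_format, of "[]" "[]"] by (simp add: words_def)
  then show ?thesis using abs_ge_zero[of "Q ([] @ []) - Q [] - Q []"] by linarith
qed

lemma div_aux1: fixes s t k n :: real assumes "k > 0" "n > 0"
  shows "s/(k*n) - t/n = (s - k*t)/(k*n)" using assms by (simp add: field_simps)

lemma div_aux2: fixes s t k n :: real assumes "k > 0" "n > 0"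
  shows "\<bar>(s - k*t)/(k*n)\<bar> = \<bar>s - k*t\<bar>/(k*n)" using assms by (simp add: abs_divide)

lemma qm_X_bound:
  assumes p: "periodic_word d R a"
    and C: "\<forall>a b. a \<in> words d R \<longrightarrow> b \<in> words d R \<longrightarrow> a @ b \<in> words d R \<longrightarrow> \<bar>Q (a @ b) - Q a - Q b\<bar> \<le> C"
    and k: "k \<ge> 1" and n: "n \<ge> 1"
  shows "\<bar>Q (word_pow a (k*n)) / real (k*n) - Q (word_pow a n) / real n\<bar> \<le> 2 * C / real n"
proof -
  have C0: "C \<ge> 0" using qm_C_nonneg[OF C] .
  have h: "\<bar>Q (word_pow a (k*n)) - real k * Q (word_pow a n)\<bar> \<le> (real k + 1) * C"
    using qm_pow[OF p C] .
  have kn: "real k > 0" "real n > 0" using k n by auto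
  have "Q (word_pow a (k*n)) / real (k*n) - Q (word_pow a n) / real n
      = (Q (word_pow a (k*n)) - real k * Q (word_pow a n)) / (real k * real n)"
    unfolding of_nat_mult by (rule div_aux1[OF kn])
  then have "\<bar>Q (word_pow a (k*n)) / real (k*n) - Q (word_pow a n) / real n\<bar>
      = \<bar>Q (word_pow a (k*n)) - real k * Q (word_pow a n)\<bar> / (real k * real n)"
    using div_aux2[OF kn] by simp
  also have "\<dots> \<le> (real k + 1) * C / (real k * real n)"
    by (rule divide_right_mono[OF h]) simp
  also have "\<dots> = ((real k + 1) / real k) * (C / real n)" by simp
  also have "\<dots> \<le> 2 * (C / real n)"
  proof (rule mult_right_mono)
    show "(real k + 1) / real k \<le> 2" using kn k by (simp add: pos_divide_le_eq)
    show "0 \<le> C / real n" using C0 kn by simp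
  qed
  finally show ?thesis by simp
qed

lemma qm_conv:
  assumes p: "periodic_word d R a"
    and C: "\<forall>a b. a \<in> words d R \<longrightarrow> b \<in> words d R \<longrightarrow> a @ b \<in> words d R \<longrightarrow> \<bar>Q (a @ b) - Q a - Q b\<bar> \<le> C"
  shows "convergent (\<lambda>k. Q (word_pow a k) / real k)" (is "convergent ?X")
proof -
  have C0: "C \<ge> 0" using qm_C_nonneg[OF C] .
  have "Cauchy ?X"
  proof (rule metric_CauchyI)
    fix e :: real assume e: "e > 0"
    obtain N :: nat where N: "4 * C / e < real N" using reals_Archimedean2 by blast
    show "\<exists>M. \<forall>m\<ge>M. \<forall>n\<ge>M. dist (?X m) (?X n) < e"
    proof (intro exI allI impI)
      fix m n assume m: "m \<ge> Suc N" and n: "n \<ge> Suc N"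
      have b1: "\<bar>?X (m*n) - ?X n\<bar> \<le> 2 * C / real n" using qm_X_bound[OF p C, of m n] m n by simp
      have b2: "\<bar>?X (m*n) - ?X m\<bar> \<le> 2 * C / real m" using qm_X_bound[OF p C, of n m] m n by (simp add: mult.commute)
      have "2 * C / real n \<le> 2 * C / real (Suc N)" using n C0 by (intro divide_left_mono) auto
      moreover have "2 * C / real m \<le> 2 * C / real (Suc N)" using m C0 by (intro divide_left_mono) auto
      moreover have "4 * C / real (Suc N) < e"
      proof -
        have "4 * C < real N * e" using N e by (simp add: pos_divide_less_eq)
        also have "\<dots> < e * real (Suc N)" using e by (simp add: ring_distribs)
        finally show ?thesis by (simp add: pos_divide_less_eq)
      qed
      moreover have "2*C/real(Suc N) + 2*C/real(Suc N) = 4*C/real(Suc N)" by (simp add: add_divide_distrib[symmetric])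
      ultimately have "\<bar>?X m - ?X n\<bar> < e" using b1 b2 by linarith
      then show "dist (?X m) (?X n) < e" by (simp add: dist_real_def)
    qed
  qed
  then show ?thesis by (simp add: Cauchy_convergent_iff)
qed

lemma qm_zero_bound:
  assumes p: "periodic_word d R a"
    and C: "\<forall>a b. a \<in> words d R \<longrightarrow> b \<in> words d R \<longrightarrow> a @ b \<in> words d R \<longrightarrow> \<bar>Q (a @ b) - Q a - Q b\<bar> \<le> C"
    and lim: "(\<lambda>k. Q (word_pow a k) / real k) \<longlonglongrightarrow> 0"
  shows "\<bar>Q a\<bar> \<le> 2 * C"
proof -
  have w1: "word_pow a 1 = a" by (simp add: word_pow_def)
  have "(\<lambda>k. \<bar>Q (word_pow a k) / real k - Q a\<bar>) \<longlonglongrightarrow> \<bar>0 - Q a\<bar>"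
    by (intro tendsto_intros lim)
  moreover have "\<forall>k\<ge>1. \<bar>Q (word_pow a k) / real k - Q a\<bar> \<le> 2 * C"
    using qm_X_bound[OF p C, of _ 1] w1 by simp
  ultimately have "\<bar>0 - Q a\<bar> \<le> 2 * C" by (intro LIMSEQ_le_const2) auto
  then show ?thesis by simp
qed


definition conn :: "nat \<Rightarrow> (nat \<Rightarrow> nat \<Rightarrow> bool) \<Rightarrow> nat \<Rightarrow> nat \<Rightarrow> nat list" where
  "conn d R i j = (SOME u. allowed d R (i # u @ [j]))"

lemma conn_allowed:
  assumes irr: "irreducible_mat d R" and i: "i \<in> alphabet d" and j: "j \<in> alphabet d"
  shows "allowed d R (i # conn d R i j @ [j])"
proof -
  obtain n where "n > 0" "mat_pow_pos d R n i j" using irr i j unfolding irreducible_mat_def by blast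
  then obtain p where p: "length p = Suc n" "allowed d R p" "hd p = i" "last p = j"
    unfolding mat_pow_pos_def by blast
  have "p \<noteq> []" "tl p \<noteq> []" using p(1) \<open>n > 0\<close> by (auto simp: length_0_conv[symmetric] simp del: length_0_conv)
  then have "p = hd p # butlast (tl p) @ [last (tl p)]" by simp
  moreover have "last (tl p) = last p" using \<open>p \<noteq> []\<close> \<open>tl p \<noteq> []\<close> by (metis last_tl)
  ultimately have "allowed d R (i # butlast (tl p) @ [j])" using p by metis
  then show ?thesis unfolding conn_def by (rule someI)
qed

lemma extend_periodic:
  assumes irr: "irreducible_mat d R" and w: "w \<in> words d R" "w \<noteq> []"
  shows "conn d R (last w) (hd w) \<in> words d R \<and> periodic_word d R (w @ conn d R (last w) (hd w))"
proof -
  let ?u = "conn d R (last w) (hd w)"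
  have aw: "allowed d R w" using w by (simp add: words_def)
  have "set w \<subseteq> alphabet d" using aw by (simp add: allowed_def)
  then have al: "last w \<in> alphabet d" "hd w \<in> alphabet d" using w(2) by auto
  have c: "allowed d R (last w # ?u @ [hd w])" by (rule conn_allowed[OF irr al])
  have wsplit: "w = butlast w @ [last w]" using w(2) by simp
  have ab: "allowed d R (butlast w)" "butlast w \<noteq> [] \<longrightarrow> R (last (butlast w)) (last w)"
    using aw wsplit allowed_append[of d R "butlast w" "[last w]"] by auto
  have "allowed d R (butlast w @ (last w # ?u @ [hd w]))"
    using ab c by (simp add: allowed_append)
  then have "allowed d R ((w @ ?u) @ [hd w])" by (subst wsplit) simp
  then have "allowed d R (w @ ?u)" "R (last (w @ ?u)) (hd w)"
    using allowed_append[of d R "w @ ?u" "[hd w]"] w(2) by auto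
  moreover have "allowed d R ?u" using c by (simp add: allowed_Cons allowed_append)
  ultimately show ?thesis using w(2) by (simp add: words_def periodic_word_def)
qed

lemma periodic_bound:
  assumes irr: "irreducible_mat d R"
    and C: "\<forall>a b. a \<in> words d R \<longrightarrow> b \<in> words d R \<longrightarrow> a @ b \<in> words d R \<longrightarrow> \<bar>(Q :: nat list \<Rightarrow> real) (a @ b) - Q a - Q b\<bar> \<le> C"
    and B: "\<forall>a. periodic_word d R a \<longrightarrow> \<bar>Q a\<bar> \<le> B"
  shows "\<exists>K. \<forall>w \<in> words d R. \<bar>Q w\<bar> \<le> K"
proof -
  define S where "S = (\<lambda>(i,j). \<bar>Q (conn d R i j)\<bar>) ` (alphabet d \<times> alphabet d)"
  have fS: "finite S" unfolding S_def alphabet_def by simp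
  define M where "M = Max S"
  have C0: "C \<ge> 0" using qm_C_nonneg[OF C] .
  have "\<bar>Q w\<bar> \<le> max C (B + M + C)" if w: "w \<in> words d R" for w
  proof (cases "w = []")
    case True
    have "[] \<in> words d R" by (simp add: words_def)
    then have "\<bar>Q ([] @ []) - Q [] - Q []\<bar> \<le> C" using C[rule_format, of "[]" "[]"] by simp
    then show ?thesis using True by simp
  next
    case False
    let ?u = "conn d R (last w) (hd w)"
    have e: "?u \<in> words d R" "periodic_word d R (w @ ?u)" using extend_periodic[OF irr w False] by auto
    have "set w \<subseteq> alphabet d" using w by (simp add: allowed_def words_def)
    then have al: "last w \<in> alphabet d" "hd w \<in> alphabet d" using False by auto
    have "\<bar>Q ?u\<bar> \<in> S" unfolding S_def using al by force
    then have "\<bar>Q ?u\<bar> \<le> M" unfolding M_def using fS by simp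
    moreover have "\<bar>Q (w @ ?u)\<bar> \<le> B" using B e by blast
    moreover have "\<bar>Q (w @ ?u) - Q w - Q ?u\<bar> \<le> C" using C w e by (simp add: periodic_word_def)
    ultimately show ?thesis by linarith
  qed
  then show ?thesis by blast
qed

theorem mainTheorem9:
  fixes d :: nat and R :: "nat \<Rightarrow> nat \<Rightarrow> bool" and L L' :: "nat list \<Rightarrow> real"
  assumes "irreducible_mat d R" and "aperiodic_mat d R"
    and "quasimorphism d R L" and "quasimorphism d R L'"
  shows "(qm_equiv d R L L' \<longleftrightarrow> (\<forall>a. periodic_word d R a \<longrightarrow> Lbar L a = Lbar L' a))
       \<and> (qm_equiv d R L L' \<longleftrightarrow>
            (\<exists>C. \<forall>a. periodic_word d R a \<longrightarrow> \<bar>L a - L' a\<bar> \<le> C))"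
proof -
  obtain C1 where C1: "\<forall>a b. a \<in> words d R \<longrightarrow> b \<in> words d R \<longrightarrow> a @ b \<in> words d R \<longrightarrow> \<bar>L (a @ b) - L a - L b\<bar> \<le> C1"
    using assms(3) unfolding quasimorphism_def by blast
  obtain C2 where C2: "\<forall>a b. a \<in> words d R \<longrightarrow> b \<in> words d R \<longrightarrow> a @ b \<in> words d R \<longrightarrow> \<bar>L' (a @ b) - L' a - L' b\<bar> \<le> C2"
    using assms(4) unfolding quasimorphism_def by blast
  define D where "D = (\<lambda>w. L w - L' w)"
  have CD: "\<forall>a b. a \<in> words d R \<longrightarrow> b \<in> words d R \<longrightarrow> a @ b \<in> words d R \<longrightarrow> \<bar>D (a @ b) - D a - D b\<bar> \<le> C1 + C2"
  proof (intro allI impI)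
    fix a b assume h: "a \<in> words d R" "b \<in> words d R" "a @ b \<in> words d R"
    have "\<bar>L (a @ b) - L a - L b\<bar> \<le> C1" "\<bar>L' (a @ b) - L' a - L' b\<bar> \<le> C2" using C1 C2 h by auto
    then show "\<bar>D (a @ b) - D a - D b\<bar> \<le> C1 + C2" unfolding D_def by linarith
  qed
  have eqv: "qm_equiv d R L L' \<longleftrightarrow> (\<exists>K. \<forall>w \<in> words d R. \<bar>D w\<bar> \<le> K)"
    unfolding qm_equiv_def D_def ..
  have P2: "qm_equiv d R L L' \<longleftrightarrow> (\<exists>C. \<forall>a. periodic_word d R a \<longrightarrow> \<bar>L a - L' a\<bar> \<le> C)"
  proof
    assume "qm_equiv d R L L'"
    then show "\<exists>C. \<forall>a. periodic_word d R a \<longrightarrow> \<bar>L a - L' a\<bar> \<le> C"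
      unfolding qm_equiv_def periodic_word_def by blast
  next
    assume "\<exists>C. \<forall>a. periodic_word d R a \<longrightarrow> \<bar>L a - L' a\<bar> \<le> C"
    then obtain B where "\<forall>a. periodic_word d R a \<longrightarrow> \<bar>D a\<bar> \<le> B" unfolding D_def by blast
    then show "qm_equiv d R L L'" using periodic_bound[OF assms(1) CD] eqv by blast
  qed
  have P1: "qm_equiv d R L L' \<longleftrightarrow> (\<forall>a. periodic_word d R a \<longrightarrow> Lbar L a = Lbar L' a)"
  proof
    assume "qm_equiv d R L L'"
    then obtain K where K: "\<forall>w \<in> words d R. \<bar>D w\<bar> \<le> K" using eqv by blast
    show "\<forall>a. periodic_word d R a \<longrightarrow> Lbar L a = Lbar L' a"
    proof (intro allI impI)
      fix a assume p: "periodic_word d R a"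
      let ?X = "\<lambda>k. L (word_pow a k) / real k" and ?Y = "\<lambda>k. L' (word_pow a k) / real k"
      have cX: "?X \<longlonglongrightarrow> lim ?X" using qm_conv[OF p C1] by (simp add: convergent_LIMSEQ_iff)
      have "[] \<in> words d R" by (simp add: words_def)
      then have "\<bar>D []\<bar> \<le> K" using K by blast
      then have K0: "K \<ge> 0" using abs_ge_zero[of "D []"] by linarith
      have "(\<lambda>k. inverse (real k)) \<longlonglongrightarrow> 0" by (rule lim_inverse_n)
      then have "(\<lambda>k. ?X k - ?Y k) \<longlonglongrightarrow> 0"
      proof (rule tendsto_0_le[where K = K])
        show "\<forall>\<^sub>F k in sequentially. norm (?X k - ?Y k) \<le> norm (inverse (real k)) * K"
        proof (rule eventuallyI)
          fix k
          have "\<bar>D (word_pow a k)\<bar> \<le> K" using K word_pow_in[OF p] by blast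
          then have "\<bar>D (word_pow a k)\<bar> / real k \<le> K / real k" by (simp add: divide_right_mono)
          then show "norm (?X k - ?Y k) \<le> norm (inverse (real k)) * K" unfolding D_def
            by (simp add: diff_divide_distrib[symmetric] abs_divide divide_inverse mult.commute
                  right_diff_distrib[symmetric] abs_mult)
        qed
      qed
      then have "(\<lambda>k. ?X k - (?X k - ?Y k)) \<longlonglongrightarrow> lim ?X - 0" by (intro tendsto_intros cX)
      then have "?Y \<longlonglongrightarrow> lim ?X" by simp
      then have "lim ?Y = lim ?X" by (rule limI)
      then show "Lbar L a = Lbar L' a" unfolding Lbar_def by simp
    qed
  next
    assume H: "\<forall>a. periodic_word d R a \<longrightarrow> Lbar L a = Lbar L' a"
    have "\<forall>a. periodic_word d R a \<longrightarrow> \<bar>D a\<bar> \<le> 2 * (C1 + C2)"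
    proof (intro allI impI)
      fix a assume p: "periodic_word d R a"
      let ?X = "\<lambda>k. L (word_pow a k) / real k" and ?Y = "\<lambda>k. L' (word_pow a k) / real k"
      have cX: "?X \<longlonglongrightarrow> lim ?X" using qm_conv[OF p C1] by (simp add: convergent_LIMSEQ_iff)
      have cY: "?Y \<longlonglongrightarrow> lim ?Y" using qm_conv[OF p C2] by (simp add: convergent_LIMSEQ_iff)
      have "lim ?X = lim ?Y" using H p unfolding Lbar_def by blast
      then have "(\<lambda>k. ?X k - ?Y k) \<longlonglongrightarrow> 0" using tendsto_diff[OF cX cY] by simp
      then have "(\<lambda>k. D (word_pow a k) / real k) \<longlonglongrightarrow> 0" unfolding D_def by (simp add: diff_divide_distrib)
      then show "\<bar>D a\<bar> \<le> 2 * (C1 + C2)" by (rule qm_zero_bound[OF p CD])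
    qed
    then show "qm_equiv d R L L'" using periodic_bound[OF assms(1) CD] eqv by blast
  qed
  show ?thesis using P1 P2 by blast
qed

end
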